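(* Consider the single-input single-output discrete-time closed-loop setting described in the context, fix $N$ finite and a DFT frequency $\omega_\ell$ at which $S(e^{j\omega_\ell})R(e^{j\omega_\ell})\neq 0$. Then, as $\sigma\to 0$ (Case 1, one experiment), \[ \sigma^{-1}(\widehat G_{\mathrm{dir}} - G) \leadsto \frac{1}{SR}\big(\bar V_y - G\bar V_u\big),\qquad \sigma^{-1}(\widehat G_{\mathrm{ind}} - G) \leadsto \frac{1}{S^2R}\bar V_y, \] where $\bar V_y,\bar V_u$ are zero-mean (statistically dependent) complex random variables with finite variances; and (Case 2, two independent experiments) \[ \sigma^{-1}(\widehat{\widehat G}_{\mathrm{io}} - G) \leadsto \frac{1}{SR}\big(\bar V_y^{(1)} - G\bar V_u^{(2)}\big), \] where $\bar V_y^{(1)}$ is independent of $\bar V_u^{(2)}$. Here $\leadsto$ denotes convergence in distribution.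
   Context: Setting: unit sample time, $\mathrm{q}$ the forward shift operator. Plant $G(\mathrm{q})$ and controller $C(\mathrm{q})$ are linear time-invariant and the closed-loop system is stable; $S = 1/(1+GC)$. Noise $v(k) = H(\mathrm{q})e(k)$ with $H$ a stable spectral factor, and $e(k) = \sigma\bar e(k)$ with $\bar e$ a zero-mean unit-variance white process whose distribution does not depend on $\sigma>0$. Reference $r(k)=r_2(k)+C(\mathrm{q})r_1(k)$ ($r_1,r_2$ known exogenous signals), $r$ periodic with period $N$. Plant output and input satisfy $y = SGr + Sv$, $u = Sr - SCv$. The data set $\{(r_k,u_k,y_k)\}_{k=0}^{N-1}$ is collected in steady state, consists of one period of $r$, and all records are time-synchronized with $r$. The $N$-point DFT is $X(e^{j\omega_\ell}) = N^{-1/2}\sum_{k=0}^{N-1}x_ke^{-j\omega_\ell k}$, $\omega_\ell=2\pi\ell/N$. At the fixed frequency, $G,S,C$ denote transfer function values at $e^{j\omega_\ell}$ and $R,U,Y$ the DFTs of $r,u,y$. The noise contributions $V_y,V_u$ are defined by $Y = SGR + V_y$, $U = SR + V_u$; they are linear in the noise and hence $\bar V_y := V_y/\sigma$, $\bar V_u := V_u/\sigma$ have distributions independent of $\sigma$. Estimators: $\widehat G_{\mathrm{dir}} := Y/U$; with $\widehat T_{yr} := Y/R$, $\widehat G_{\mathrm{ind}} := \widehat T_{yr}/(1-\widehat T_{yr}C)$. For Case 2, a second independent experiment with the same excitation $r$ is performed (identical deterministic parts, independent noise); $Y^{(1)}$ is the output DFT of experiment 1 with normalized noise contribution $\bar V_y^{(1)}$,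 $U^{(2)}$ the input DFT of experiment 2 with normalized noise contribution $\bar V_u^{(2)}$, and $\widehat{\widehat G}_{\mathrm{io}} := \dfrac{Y^{(1)}/R}{U^{(2)}/R}$. *)

theory Defs
  imports "HOL-Probability.Probability"
begin

text \<open>Estimators at a fixed DFT frequency (all quantities are complex numbers).\<close>

definition G_dir :: "complex \<Rightarrow> complex \<Rightarrow> complex" where
  "G_dir Y U = Y / U"

definition T_yr :: "complex \<Rightarrow> complex \<Rightarrow> complex" where
  "T_yr Y R = Y / R"

definition G_ind :: "complex \<Rightarrow> complex \<Rightarrow> complex \<Rightarrow> complex" where
  "G_ind C Y R = T_yr Y R / (1 - T_yr Y R * C)"

definition G_io :: "complex \<Rightarrow> complex \<Rightarrow> complex \<Rightarrow> complex" where
  "G_io Y1 U2 R = (Y1 / R) / (U2 / R)"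

definition conv_distr_at_0 :: "(real \<Rightarrow> complex measure) \<Rightarrow> complex measure \<Rightarrow> bool" where
  "conv_distr_at_0 \<mu> \<nu> \<longleftrightarrow>
     (\<forall>f :: complex \<Rightarrow> real. continuous_on UNIV f \<and> bounded (range f) \<longrightarrow>
        ((\<lambda>\<sigma>. \<integral>x. f x \<partial>(\<mu> \<sigma>)) \<longlongrightarrow> (\<integral>x. f x \<partial>\<nu>)) (at_right 0))"

end

theory Submission
  imports Defs
begin

lemma conv_lemma:
  fixes Z :: "real \<Rightarrow> 'a \<Rightarrow> complex"
  assumes P: "prob_space M" and mZ: "\<And>\<sigma>. Z \<sigma> \<in> borel_measurable M" and mZ0: "Z0 \<in> borel_measurable M"
   and lim: "\<And>x. x \<in> space M \<Longrightarrow> ((\<lambda>\<sigma>. Z \<sigma> x) \<longlongrightarrow> Z0 x) (at_right 0)"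
  shows "conv_distr_at_0 (\<lambda>\<sigma>. distr M borel (Z \<sigma>)) (distr M borel Z0)"
  unfolding conv_distr_at_0_def
proof (intro allI impI)
  fix f :: "complex \<Rightarrow> real" assume f: "continuous_on UNIV f \<and> bounded (range f)"
  then obtain B where B: "\<And>x. norm (f x) \<le> B" by (auto simp: bounded_iff)
  have fm: "f \<in> borel_measurable borel" using f by (intro borel_measurable_continuous_onI) auto
  have eq: "\<And>\<sigma>. (\<integral>x. f x \<partial>(distr M borel (Z \<sigma>))) = (\<integral>x. f (Z \<sigma> x) \<partial>M)"
    by (rule integral_distr[OF mZ fm])
  have eq0: "(\<integral>x. f x \<partial>(distr M borel Z0)) = (\<integral>x. f (Z0 x) \<partial>M)"
    by (rule integral_distr[OF mZ0 fm])
  have "((\<lambda>t. \<integral>x. f (Z (inverse t) x) \<partial>M) \<longlongrightarrow> (\<integral>x. f (Z0 x) \<partial>M)) at_top"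
  proof (rule integral_dominated_convergence_at_top[where w="\<lambda>_. B"])
    show "(\<lambda>x. f (Z0 x)) \<in> borel_measurable M" using fm mZ0 by measurable
    show "(\<lambda>x. f (Z (inverse t) x)) \<in> borel_measurable M" for t using fm mZ by measurable
    show "integrable M (\<lambda>_. B)" using P by (simp add: prob_space.finite_measure finite_measure.integrable_const)
    show "AE x in M. ((\<lambda>t. f (Z (inverse t) x)) \<longlongrightarrow> f (Z0 x)) at_top"
    proof (rule AE_I2)
      fix x assume x: "x \<in> space M"
      have c: "isCont f (Z0 x)" using f by (simp add: continuous_on_eq_continuous_at)
      have "((\<lambda>t. Z (inverse t) x) \<longlongrightarrow> Z0 x) at_top"
        using lim[OF x] by (simp add: filterlim_at_right_to_top)
      then show "((\<lambda>t. f (Z (inverse t) x)) \<longlongrightarrow> f (Z0 x)) at_top"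
        using c isCont_tendsto_compose by blast
    qed
    show "\<forall>\<^sub>F i in at_top. AE x in M. norm (f (Z (inverse i) x)) \<le> B" using B by auto
  qed
  then show "((\<lambda>\<sigma>. \<integral>x. f x \<partial>(distr M borel (Z \<sigma>))) \<longlongrightarrow> (\<integral>x. f x \<partial>(distr M borel Z0))) (at_right 0)"
    unfolding eq eq0 by (simp add: filterlim_at_right_to_top)
qed

lemma sub_div: "d \<noteq> 0 \<Longrightarrow> (x::complex)/d - g = (x - g*d)/d"
  by (simp add: field_simps)

lemma lim1:
  fixes a G y u :: complex
  assumes a: "a \<noteq> 0"
  shows "((\<lambda>\<sigma>::real. ((a*G + of_real \<sigma> * y)/(a + of_real \<sigma> * u) - G)/of_real \<sigma>) \<longlongrightarrow> (y - G*u)/a) (at_right 0)"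
proof -
  have d: "((\<lambda>\<sigma>::real. a + of_real \<sigma> * u) \<longlongrightarrow> a) (at_right 0)"
    by (auto intro!: tendsto_eq_intros)
  have ev: "\<forall>\<^sub>F \<sigma> in at_right 0. a + of_real \<sigma> * u \<noteq> 0"
    using tendsto_imp_eventually_ne[OF d a] .
  have ev2: "\<forall>\<^sub>F \<sigma> in at_right (0::real). \<sigma> \<noteq> 0"
    by (simp add: eventually_at_right_less eventually_mono less_imp_neq[symmetric] eventually_at_filter)
  have h: "((\<lambda>\<sigma>::real. (y - G*u)/(a + of_real \<sigma> * u)) \<longlongrightarrow> (y - G*u)/a) (at_right 0)"
    using a by (auto intro!: tendsto_eq_intros)
  show ?thesis
  proof (rule Lim_transform_eventually[OF h])
    show "\<forall>\<^sub>F \<sigma> in at_right 0. (y - G*u)/(a + of_real \<sigma> * u) = ((a*G + of_real \<sigma> * y)/(a + of_real \<sigma> * u) - G)/of_real \<sigma>"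
      using ev ev2
    proof eventually_elim
      case (elim \<sigma>)
      then have "complex_of_real \<sigma> \<noteq> 0" by simp
      note s = this
      have "(a*G + of_real \<sigma> * y)/(a + of_real \<sigma> * u) - G = of_real \<sigma> * (y - G*u) / (a + of_real \<sigma> * u)"
        using elim(1) by (subst sub_div) (auto simp: algebra_simps)
      then show ?case using s by simp
    qed
  qed
qed

lemma lim2:
  fixes S G C R y :: complex
  assumes S: "S = 1 / (1 + G * C)" and SR: "S * R \<noteq> 0"
  shows "((\<lambda>\<sigma>::real. ((S*G*R + of_real \<sigma> * y)/R / (1 - (S*G*R + of_real \<sigma> * y)/R * C) - G)/of_real \<sigma>) \<longlongrightarrow> y/(S^2*R)) (at_right 0)"
proof -
  have S0: "S \<noteq> 0" and R0: "R \<noteq> 0" using SR by auto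
  have g: "1 + G*C \<noteq> 0" using S S0 by auto
  have SS: "S * (1 + G*C) = 1" using S g by simp
  have d: "((\<lambda>\<sigma>::real. S - of_real \<sigma> * y * C / R) \<longlongrightarrow> S) (at_right 0)"
    using R0 by (auto intro!: tendsto_eq_intros)
  have ev: "\<forall>\<^sub>F \<sigma> in at_right 0. S - of_real \<sigma> * y * C / R \<noteq> 0"
    using tendsto_imp_eventually_ne[OF d S0] .
  have ev2: "\<forall>\<^sub>F \<sigma> in at_right (0::real). \<sigma> \<noteq> 0"
    by (simp add: eventually_at_right_less eventually_mono less_imp_neq[symmetric] eventually_at_filter)
  have h: "((\<lambda>\<sigma>::real. y/(R*S*(S - of_real \<sigma> * y * C / R))) \<longlongrightarrow> y/(S^2*R)) (at_right 0)"
    apply (rule tendsto_eq_intros | simp add: S0 R0 power2_eq_square)+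
    done
  show ?thesis
  proof (rule Lim_transform_eventually[OF h])
    show "\<forall>\<^sub>F \<sigma> in at_right 0. y/(R*S*(S - of_real \<sigma> * y * C / R)) = ((S*G*R + of_real \<sigma> * y)/R / (1 - (S*G*R + of_real \<sigma> * y)/R * C) - G)/of_real \<sigma>"
      using ev ev2
    proof eventually_elim
      case (elim \<sigma>)
      have e1: "1 - (S*G*R + of_real \<sigma> * y)/R * C = S - of_real \<sigma> * y * C / R"
      proof -
        have k: "1 - S*G*C = S" using SS by (simp add: algebra_simps)
        have "(S*G*R + of_real \<sigma> * y)/R * C = S*G*C + of_real \<sigma> * y * C / R"
          using R0 by (simp add: field_simps)
        then show ?thesis using k by (simp add: algebra_simps)
      qed
      have "complex_of_real \<sigma> \<noteq> 0" using elim by simp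
      note s = this
      define D where "D = S - of_real \<sigma> * y * C / R"
      have D0: "D \<noteq> 0" using elim D_def by simp
      have T: "(S*G*R + of_real \<sigma> * y)/R = S*G + of_real \<sigma> * y / R" using R0 by (simp add: field_simps)
      have num: "S*G + of_real \<sigma> * y / R - G * D = of_real \<sigma> * y * (1 + G*C) / R"
        unfolding D_def by (simp add: field_simps R0)
      also have "... = of_real \<sigma> * y / (R*S)" using SS S0 R0
        by (metis (no_types, lifting) divide_divide_eq_left mult_1 nonzero_eq_divide_eq times_divide_eq_left)
      finally have num2: "S*G + of_real \<sigma> * y / R - G * D = of_real \<sigma> * y / (R*S)" .
      have "((S*G*R + of_real \<sigma> * y)/R / (1 - (S*G*R + of_real \<sigma> * y)/R * C) - G) = of_real \<sigma> * y / (R*S) / D"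
      proof -
        have e1': "1 - (S*G + of_real \<sigma> * y / R)*C = D" using e1 T D_def by simp
        have "((S*G*R + of_real \<sigma> * y)/R / (1 - (S*G*R + of_real \<sigma> * y)/R * C) - G) = (S*G + of_real \<sigma> * y / R)/D - G"
          by (simp only: T e1')
        also have "... = of_real \<sigma> * y / (R*S) / D" using D0 by (subst sub_div) (auto simp: num2)
        finally show ?thesis .
      qed
      then show ?case using s D_def by simp
    qed
  qed
qed

theorem lemma1:
  fixes M :: "'a measure"
    and G C R S :: complex
    and Vy Vu Vy1 Vu2 :: "'a \<Rightarrow> complex"
  assumes prob: "prob_space M"
    and S_def: "S = 1 / (1 + G * C)"
    and SR_nz: "S * R \<noteq> 0"
    and meas: "Vy \<in> borel_measurable M" "Vu \<in> borel_measurable M"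
              "Vy1 \<in> borel_measurable M" "Vu2 \<in> borel_measurable M"
    and zero_mean: "integral\<^sup>L M Vy = 0" "integral\<^sup>L M Vu = 0"
                   "integral\<^sup>L M Vy1 = 0" "integral\<^sup>L M Vu2 = 0"
    and fin_var: "integrable M (\<lambda>x. (cmod (Vy x))\<^sup>2)" "integrable M (\<lambda>x. (cmod (Vu x))\<^sup>2)"
                 "integrable M (\<lambda>x. (cmod (Vy1 x))\<^sup>2)" "integrable M (\<lambda>x. (cmod (Vu2 x))\<^sup>2)"
    and indep: "prob_space.indep_var M borel Vy1 borel Vu2"
  shows
    "conv_distr_at_0
       (\<lambda>\<sigma>. distr M borel (\<lambda>x.
          (G_dir (S * G * R + complex_of_real \<sigma> * Vy x) (S * R + complex_of_real \<sigma> * Vu x) - G)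
            / complex_of_real \<sigma>))
       (distr M borel (\<lambda>x. (Vy x - G * Vu x) / (S * R)))
   \<and> conv_distr_at_0
       (\<lambda>\<sigma>. distr M borel (\<lambda>x.
          (G_ind C (S * G * R + complex_of_real \<sigma> * Vy x) R - G) / complex_of_real \<sigma>))
       (distr M borel (\<lambda>x. Vy x / (S\<^sup>2 * R)))
   \<and> conv_distr_at_0
       (\<lambda>\<sigma>. distr M borel (\<lambda>x.
          (G_io (S * G * R + complex_of_real \<sigma> * Vy1 x) (S * R + complex_of_real \<sigma> * Vu2 x) R - G)
            / complex_of_real \<sigma>))
       (distr M borel (\<lambda>x. (Vy1 x - G * Vu2 x) / (S * R)))"
  proof -
  have R0: "R \<noteq> 0" using SR_nz by auto
  have e: "S * G * R = (S*R) * G" by (simp add: algebra_simps)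
  show ?thesis
  proof (intro conjI)
    show "conv_distr_at_0
       (\<lambda>\<sigma>. distr M borel (\<lambda>x.
          (G_dir (S * G * R + complex_of_real \<sigma> * Vy x) (S * R + complex_of_real \<sigma> * Vu x) - G)
            / complex_of_real \<sigma>))
       (distr M borel (\<lambda>x. (Vy x - G * Vu x) / (S * R)))"
      apply (rule conv_lemma[OF prob])
      using meas apply (simp_all add: G_dir_def)
      apply (simp only: e)
      by (rule lim1[OF SR_nz])
    show "conv_distr_at_0
       (\<lambda>\<sigma>. distr M borel (\<lambda>x.
          (G_ind C (S * G * R + complex_of_real \<sigma> * Vy x) R - G) / complex_of_real \<sigma>))
       (distr M borel (\<lambda>x. Vy x / (S\<^sup>2 * R)))"
      apply (rule conv_lemma[OF prob])
      using meas apply (simp add: G_ind_def T_yr_def)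
      using meas apply simp
      apply (unfold G_ind_def T_yr_def)
      by (rule lim2[OF S_def SR_nz])
    show "conv_distr_at_0
       (\<lambda>\<sigma>. distr M borel (\<lambda>x.
          (G_io (S * G * R + complex_of_real \<sigma> * Vy1 x) (S * R + complex_of_real \<sigma> * Vu2 x) R - G)
            / complex_of_real \<sigma>))
       (distr M borel (\<lambda>x. (Vy1 x - G * Vu2 x) / (S * R)))"
      apply (rule conv_lemma[OF prob])
      using meas R0 apply (simp_all add: G_io_def)
      apply (simp only: e)
      by (rule lim1[OF SR_nz])
  qed
qed

end
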